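(* Let $g(v;a)=v(1-v)(v-a)$, $k>0$, $a\in(0,\frac12)$, and $A\in(a,\frac{a+1}{3})$. Then $$d^\diamond(A;a)=\frac{g'(A;a)}{k+1},$$ where $g'=\partial_v g$.
   Context: $d^\diamond(A;a)=\inf\{d>0:\ d(k+1)(A-v)-g(A;a)\ge -g(v;a)\ \text{for all }v\in[0,A]\}$. *)

theory Defs
  imports "HOL-Analysis.Analysis"
begin

definition g :: "real \<Rightarrow> real \<Rightarrow> real" where
  "g v a = v * (1 - v) * (v - a)"

definition d_diamond :: "real \<Rightarrow> real \<Rightarrow> real \<Rightarrow> real" where
  "d_diamond k A a = Inf {d. d > 0 \<and> (\<forall>v\<in>{0..A}. d * (k + 1) * (A - v) - g A a \<ge> - g v a)}"

end

theory Submission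
  imports Defs
begin

theorem lemma7p2:
  fixes k a A :: real
  assumes "k > 0" and "0 < a" and "a < 1/2" and "a < A" and "A < (a + 1) / 3"
  shows "d_diamond k A a = deriv (\<lambda>v. g v a) A / (k + 1)"
proof -
  define G where "G = -3*A^2 + 2*(1+a)*A - a"
  have der: "((\<lambda>v. g v a) has_real_derivative G) (at A)"
    unfolding g_def G_def
    by (auto intro!: derivative_eq_intros simp: algebra_simps power2_eq_square)
  hence dG: "deriv (\<lambda>v. g v a) A = G" by (rule DERIV_imp_deriv)
  have Gpos: "G > 0"
  proof -
    have "G = (A - a) * (1 + a - 3*A) + A * (1 - 2*a) + a^2" unfolding G_def
      by (simp add: algebra_simps power2_eq_square)
    moreover have "(A - a) * (1 + a - 3*A) > 0" using assms by (intro mult_pos_pos) auto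
    moreover have "A * (1 - 2*a) > 0" using assms by (intro mult_pos_pos) auto
    moreover have "a^2 > 0" using assms by simp
    ultimately show ?thesis by linarith
  qed
  have kp: "k + 1 > 0" using assms by simp
  define D where "D = G / (k+1)"
  have Dpos: "D > 0" unfolding D_def using Gpos kp by simp
  have key: "\<And>v. g A a - g v a = (A - v) * (G - (A - v) * (1 + a - 2*A - v))"
    unfolding g_def G_def by (simp add: algebra_simps power2_eq_square power3_eq_cube)
  have S: "{d. d > 0 \<and> (\<forall>v\<in>{0..A}. d * (k + 1) * (A - v) - g A a \<ge> - g v a)} = {D..}"
  proof (rule set_eqI, rule iffI)
    fix d assume "d \<in> {d. d > 0 \<and> (\<forall>v\<in>{0..A}. d * (k + 1) * (A - v) - g A a \<ge> - g v a)}"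
    hence dp: "d > 0" and H: "\<forall>v\<in>{0..A}. d * (k + 1) * (A - v) - g A a \<ge> - g v a" by auto
    show "d \<in> {D..}"
    proof (rule ccontr)
      assume "d \<notin> {D..}"
      hence "d < D" by simp
      hence "d * (k+1) < G" unfolding D_def using kp by (simp add: field_simps)
      define e where "e = G - d*(k+1)"
      have ep: "e > 0" using \<open>d * (k+1) < G\<close> e_def by simp
      define t where "t = min A (e/4)"
      have tp: "t > 0" using ep assms unfolding t_def by simp
      have tA: "t \<le> A" and te: "t \<le> e/4" unfolding t_def by auto
      have v: "A - t \<in> {0..A}" using tp tA by simp
      have f: "1 + a - 2*A - (A - t) \<le> 2" using assms tA by simp
      have f0: "1 + a - 2*A - (A - t) \<ge> 0" using assms tA tp by simp
      have "t * (1 + a - 2*A - (A - t)) \<le> t * 2" using f tp by (intro mult_left_mono) auto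
      hence lt: "t * (1 + a - 2*A - (A - t)) < e" using te ep by linarith
      from bspec[OF H v] have "d * (k + 1) * t - g A a \<ge> - g (A - t) a" by simp
      hence "d * (k + 1) * t \<ge> t * (G - t * (1 + a - 2*A - (A - t)))" using key[of "A - t"] by simp
      hence "t * (d*(k+1)) \<ge> t * (G - t * (1 + a - 2*A - (A - t)))" by (simp add: algebra_simps)
      hence "d*(k+1) \<ge> G - t * (1 + a - 2*A - (A - t))" using tp by simp
      thus False using lt e_def by linarith
    qed
  next
    fix d assume "d \<in> {D..}"
    hence dD: "d \<ge> D" by simp
    hence c: "d * (k+1) \<ge> G" unfolding D_def using kp by (simp add: field_simps)
    have "\<forall>v\<in>{0..A}. d * (k + 1) * (A - v) - g A a \<ge> - g v a"
    proof
      fix v assume v: "v \<in> {0..A}"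
      have n: "(A - v) * (1 + a - 2*A - v) \<ge> 0" using v assms by (intro mult_nonneg_nonneg) auto
      have "(A - v) * (d*(k+1) - G + (A - v) * (1 + a - 2*A - v)) \<ge> 0"
        using v c n by (intro mult_nonneg_nonneg) auto
      thus "d * (k + 1) * (A - v) - g A a \<ge> - g v a" using key[of v] by (simp add: algebra_simps)
    qed
    thus "d \<in> {d. d > 0 \<and> (\<forall>v\<in>{0..A}. d * (k + 1) * (A - v) - g A a \<ge> - g v a)}"
      using dD Dpos by simp
  qed
  show ?thesis unfolding d_diamond_def S dG D_def[symmetric] by simp
qed

end
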